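(* Let $G$ be a graph with $m\ge1$ edges, let $k\ge1$ and $0\le p\le m$ be integers, $\ell=m-p$, and $\eta=2^k(\ell+2)$. Let $E$ be the classification instance $E(G,\eta)$ described in the context. Then $G$ has a set $U\subseteq V(G)$ with $|U|\le k$ that is incident to at least $p$ edges if and only if there is a decision tree $T$ with $dep(T)\le k$ and $|O(T,E)|\le \ell\eta$.
   Context: Fix an ordering $e_1,\dots,e_m$ of $E(G)$. For a positive integer $\eta$, $E(G,\eta)$ has features $V(G)\cup\{d_0\}$ and, for each $r\in[\eta]$ and $i\in[m]$: a negative example with $d_0=2m(r-1)+2i-1$ and, for each $v\in V(G)$, value $1$ if $v$ is an endpoint of $e_i$ and $0$ otherwise; and a positive example with $d_0=2m(r-1)+2i$ and value $0$ on every vertex feature. A decision tree (DT) is a rooted tree whose test nodes $v$ carry a feature $f(v)$ and integer threshold $\lambda(v)$ (examples with $e(f(v))\le\lambda(v)$ go left, others right) and whose leaves are labeled positive or negative. $dep(T)$ is the maximum number of test nodes on a root-to-leaf path. An example is an outlier for $T$ if it reaches a leaf with the opposite label; $O(T,E)$ is the set of outliers. *)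

theory Defs
  imports Main
begin

text \<open>Simple graph: finite vertex set V and a list es fixing the ordering e_1..e_m
of the edge set; each edge is a 2-element subset of V, no repeated edges.\<close>
definition simple_graph :: "'v set \<Rightarrow> 'v set list \<Rightarrow> bool" where
  "simple_graph V es \<longleftrightarrow> finite V \<and> distinct es \<and>
     (\<forall>e\<in>set es. e \<subseteq> V \<and> card e = 2)"

text \<open>Features: None is d_0, Some v is the vertex feature v.
An example is a pair (assignment of integer values to features, label), label True = positive.\<close>
type_synonym 'v example = "('v option \<Rightarrow> int) \<times> bool"

definition features :: "'v set \<Rightarrow> 'v option set" where
  "features V = {None} \<union> Some ` V"

text \<open>Negative example for (r,i), 1-indexed: d_0 = 2m(r-1)+2i-1, vertex v has value 1 iff v in e_i.\<close>
definition neg_ex :: "'v set list \<Rightarrow> nat \<Rightarrow> nat \<Rightarrow> 'v example" where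
  "neg_ex es r i =
     ((\<lambda>f. case f of None \<Rightarrow> int (2 * length es * (r - 1) + 2 * i) - 1
                  | Some v \<Rightarrow> (if v \<in> es ! (i - 1) then 1 else 0)), False)"

definition pos_ex :: "'v set list \<Rightarrow> nat \<Rightarrow> nat \<Rightarrow> 'v example" where
  "pos_ex es r i =
     ((\<lambda>f. case f of None \<Rightarrow> int (2 * length es * (r - 1) + 2 * i)
                  | Some v \<Rightarrow> 0), True)"

definition instance_E :: "'v set list \<Rightarrow> nat \<Rightarrow> 'v example set" where
  "instance_E es \<eta> =
     {neg_ex es r i | r i. r \<in> {1..\<eta>} \<and> i \<in> {1..length es}} \<union>
     {pos_ex es r i | r i. r \<in> {1..\<eta>} \<and> i \<in> {1..length es}}"

datatype 'f dtree = Leaf bool | Node 'f int "'f dtree" "'f dtree"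

fun dep :: "'f dtree \<Rightarrow> nat" where
  "dep (Leaf _) = 0"
| "dep (Node _ _ l r) = Suc (max (dep l) (dep r))"

fun tree_feats :: "'f dtree \<Rightarrow> 'f set" where
  "tree_feats (Leaf _) = {}"
| "tree_feats (Node f _ l r) = {f} \<union> tree_feats l \<union> tree_feats r"

fun classify :: "'f dtree \<Rightarrow> ('f \<Rightarrow> int) \<Rightarrow> bool" where
  "classify (Leaf b) x = b"
| "classify (Node f t l r) x = (if x f \<le> t then classify l x else classify r x)"

definition outliers :: "'f dtree \<Rightarrow> (('f \<Rightarrow> int) \<times> bool) set \<Rightarrow> (('f \<Rightarrow> int) \<times> bool) set" where
  "outliers T E = {e \<in> E. classify T (fst e) \<noteq> snd e}"

end

theory Submission imports Defs begin

fun thr :: "'v option dtree \<Rightarrow> int set" where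
  "thr (Leaf _) = {}"
| "thr (Node f t l r) = (if f = None then {t} else {}) \<union> thr l \<union> thr r"

lemma thr_fin: "finite (thr T)"
  by (induction T) auto

lemma thr_card: "card (thr T) \<le> 2 ^ dep T - 1"
proof (induction T)
  case (Leaf x)
  then show ?case by simp
next
  case (Node f t l r)
  have "card (thr (Node f t l r)) \<le> card (if f = None then {t} else {}) + card (thr l) + card (thr r)"
    by (simp only: thr.simps) (metis (no_types, lifting) card_Un_le le_trans add_le_mono order_refl)
  also have "\<dots> \<le> 1 + (2 ^ dep l - 1) + (2 ^ dep r - 1)"
    using Node.IH by (intro add_mono) auto
  also have "\<dots> \<le> 2 ^ dep (Node f t l r) - 1"
  proof -
    have a: "(2::nat) ^ dep l \<le> 2 ^ max (dep l) (dep r)" "(2::nat) ^ dep r \<le> 2 ^ max (dep l) (dep r)"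
      by (auto intro: power_increasing)
    have b: "(1::nat) \<le> 2 ^ dep l" "(1::nat) \<le> 2 ^ dep r" by auto
    have c: "(2::nat) ^ dep (Node f t l r) = 2 * 2 ^ max (dep l) (dep r)" by simp
    show ?thesis using a b c by linarith
  qed
  finally show ?case .
qed

lemma outliers_Node: "outliers (Node f t l r) E = outliers l {e\<in>E. fst e f \<le> t} \<union> outliers r {e\<in>E. \<not> fst e f \<le> t}"
  by (auto simp: outliers_def)

lemma outliers_mono: "A \<subseteq> B \<Longrightarrow> outliers T A \<subseteq> outliers T B"
  by (auto simp: outliers_def)

lemma outliers_fin: "finite E \<Longrightarrow> finite (outliers T E)"
  by (simp add: outliers_def)

lemma neg_inj: "inj (neg_ex es r)"
  by (rule injI) (auto simp: neg_ex_def dest!: fun_cong[where x=None])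

lemma pos_inj: "inj (pos_ex es r)"
  by (rule injI) (auto simp: pos_ex_def dest!: fun_cong[where x=None])

lemma block:
  fixes es :: "'v set list"
  assumes "\<forall>th\<in>thr T. th \<le> int (2*length es*(r-1)) \<or> th \<ge> int (2*length es*(r-1)) + 2*int (length es)"
   and "S \<subseteq> {1..length es}"
  shows "\<exists>W. finite W \<and> Some ` W \<subseteq> tree_feats T \<and> card W \<le> dep T \<and>
    card {i\<in>S. es!(i-1) \<inter> W = {}} \<le> card (outliers T (neg_ex es r ` S \<union> pos_ex es r ` {1..length es}))"
  using assms
proof (induction T arbitrary: S)
  case (Leaf b)
  let ?E = "neg_ex es r ` S \<union> pos_ex es r ` {1..length es}"
  have fin: "finite S" using Leaf.prems(2) finite_subset by blast
  have finE: "finite (outliers (Leaf b) ?E)" using fin by (intro outliers_fin) auto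
  have "card S \<le> card (outliers (Leaf b) ?E)"
  proof (cases b)
    case True
    have "neg_ex es r ` S \<subseteq> outliers (Leaf b) ?E" using True by (auto simp: outliers_def neg_ex_def)
    then have "card (neg_ex es r ` S) \<le> card (outliers (Leaf b) ?E)" using finE by (intro card_mono)
    then show ?thesis by (simp add: card_image inj_on_subset[OF neg_inj])
  next
    case False
    have "pos_ex es r ` {1..length es} \<subseteq> outliers (Leaf b) ?E" using False by (auto simp: outliers_def pos_ex_def)
    then have "card (pos_ex es r ` {1..length es}) \<le> card (outliers (Leaf b) ?E)" using finE by (intro card_mono)
    moreover have "card S \<le> length es" using Leaf.prems(2) by (metis card_atLeastAtMost card_mono finite_atLeastAtMost diff_Suc_1)
    ultimately show ?thesis by (simp add: card_image inj_on_subset[OF pos_inj])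
  qed
  then show ?case by (intro exI[of _ "{}"]) simp
next
  case (Node f t l rt)
  let ?E = "\<lambda>S. neg_ex es r ` S \<union> pos_ex es r ` {1..length es}"
  have fin: "finite S" using Node.prems(2) finite_subset by blast
  have finE: "finite (outliers (Node f t l rt) (?E S))" using fin by (intro outliers_fin) auto
  have thrl: "\<forall>th\<in>thr l. th \<le> int (2*length es*(r-1)) \<or> th \<ge> int (2*length es*(r-1)) + 2*int (length es)"
    using Node.prems(1) by auto
  have thrr: "\<forall>th\<in>thr rt. th \<le> int (2*length es*(r-1)) \<or> th \<ge> int (2*length es*(r-1)) + 2*int (length es)"
    using Node.prems(1) by auto
  have goL: "?case" if L: "\<And>e. e \<in> ?E S \<Longrightarrow> fst e f \<le> t"
  proof -
    obtain W where W: "finite W" "Some ` W \<subseteq> tree_feats l" "card W \<le> dep l"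
      "card {i\<in>S. es!(i-1) \<inter> W = {}} \<le> card (outliers l (?E S))"
      using Node.IH(1)[OF thrl Node.prems(2)] by blast
    have "outliers l (?E S) \<subseteq> outliers (Node f t l rt) (?E S)"
      using L unfolding outliers_Node by (auto simp: outliers_def)
    then have "card (outliers l (?E S)) \<le> card (outliers (Node f t l rt) (?E S))"
      using finE by (intro card_mono)
    then show ?thesis using W by (intro exI[of _ W]) auto
  qed
  have goR: "?case" if R: "\<And>e. e \<in> ?E S \<Longrightarrow> \<not> fst e f \<le> t"
  proof -
    obtain W where W: "finite W" "Some ` W \<subseteq> tree_feats rt" "card W \<le> dep rt"
      "card {i\<in>S. es!(i-1) \<inter> W = {}} \<le> card (outliers rt (?E S))"
      using Node.IH(2)[OF thrr Node.prems(2)] by blast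
    have "outliers rt (?E S) \<subseteq> outliers (Node f t l rt) (?E S)"
      using R unfolding outliers_Node by (auto simp: outliers_def)
    then have "card (outliers rt (?E S)) \<le> card (outliers (Node f t l rt) (?E S))"
      using finE by (intro card_mono)
    then show ?thesis using W by (intro exI[of _ W]) auto
  qed
  show ?case
  proof (cases f)
    case None
    then have "t \<le> int (2*length es*(r-1)) \<or> t \<ge> int (2*length es*(r-1)) + 2*int (length es)"
      using Node.prems(1) by auto
    then show ?thesis
    proof
      assume a: "t \<le> int (2*length es*(r-1))"
      show ?thesis
      proof (rule goR)
        fix e assume "e \<in> ?E S"
        then show "\<not> fst e f \<le> t" using a None Node.prems(2)
          by (auto simp: neg_ex_def pos_ex_def)
      qed
    next
      assume a: "t \<ge> int (2*length es*(r-1)) + 2*int (length es)"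
      show ?thesis
      proof (rule goL)
        fix e assume "e \<in> ?E S"
        then show "fst e f \<le> t" using a None Node.prems(2)
          by (auto simp: neg_ex_def pos_ex_def)
      qed
    qed
  next
    case (Some v)
    consider "t < 0" | "t \<ge> 1" | "t = 0" by linarith
    then show ?thesis
    proof cases
      case 1
      show ?thesis
      proof (rule goR)
        fix e assume "e \<in> ?E S"
        then show "\<not> fst e f \<le> t" using 1 Some by (auto simp: neg_ex_def pos_ex_def split: if_splits)
      qed
    next
      case 2
      show ?thesis
      proof (rule goL)
        fix e assume "e \<in> ?E S"
        then show "fst e f \<le> t" using 2 Some by (auto simp: neg_ex_def pos_ex_def)
      qed
    next
      case 3
      define S' where "S' = {i\<in>S. v \<notin> es!(i-1)}"
      have S'sub: "S' \<subseteq> {1..length es}" using Node.prems(2) by (auto simp: S'_def)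
      obtain W where W: "finite W" "Some ` W \<subseteq> tree_feats l" "card W \<le> dep l"
        "card {i\<in>S'. es!(i-1) \<inter> W = {}} \<le> card (outliers l (?E S'))"
        using Node.IH(1)[OF thrl S'sub] by blast
      have "?E S' \<subseteq> {e \<in> ?E S. fst e f \<le> t}"
        using 3 Some by (auto simp: S'_def neg_ex_def pos_ex_def)
      then have "outliers l (?E S') \<subseteq> outliers (Node f t l rt) (?E S)"
        unfolding outliers_Node by (meson Un_upper1 order_trans outliers_mono)
      then have c: "card (outliers l (?E S')) \<le> card (outliers (Node f t l rt) (?E S))"
        using finE by (intro card_mono)
      have eq: "{i\<in>S'. es!(i-1) \<inter> W = {}} = {i\<in>S. es!(i-1) \<inter> insert v W = {}}"
        by (auto simp: S'_def)
      have "card (insert v W) \<le> Suc (card W)" by (simp add: card_insert_if W(1))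
      then have "card (insert v W) \<le> dep (Node f t l rt)" using W(3) by simp
      moreover have "Some ` insert v W \<subseteq> tree_feats (Node f t l rt)" using W(2) Some by auto
      ultimately show ?thesis using W(1) c eq W(4)
        by (intro exI[of _ "insert v W"]) auto
    qed
  qed
qed

fun chain :: "'v list \<Rightarrow> 'v option dtree" where
  "chain [] = Leaf True"
| "chain (u # us) = Node (Some u) 0 (chain us) (Leaf False)"

lemma chain_dep: "dep (chain xs) = length xs"
  by (induction xs) auto

lemma chain_feats: "tree_feats (chain xs) = Some ` set xs"
  by (induction xs) auto

lemma chain_classify: "classify (chain xs) x = (\<forall>u\<in>set xs. x (Some u) \<le> 0)"
  by (induction xs) auto

lemma count_idx:
  assumes "distinct es"
  shows "card {i\<in>{1..length es}. P (es!(i-1))} = card {e\<in>set es. P e}"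
proof -
  have inj: "inj_on (\<lambda>i. es!(i-1)) {i\<in>{1..length es}. P (es!(i-1))}"
    using assms by (auto simp: inj_on_def nth_eq_iff_index_eq)
  have img: "(\<lambda>i. es!(i-1)) ` {i\<in>{1..length es}. P (es!(i-1))} = {e\<in>set es. P e}"
  proof
    show "(\<lambda>i. es!(i-1)) ` {i\<in>{1..length es}. P (es!(i-1))} \<subseteq> {e\<in>set es. P e}"
      by auto
  next
    show "{e\<in>set es. P e} \<subseteq> (\<lambda>i. es!(i-1)) ` {i\<in>{1..length es}. P (es!(i-1))}"
    proof
      fix e assume "e \<in> {e\<in>set es. P e}"
      then obtain j where j: "j < length es" "es!j = e" "P e" by (auto simp: in_set_conv_nth)
      then show "e \<in> (\<lambda>i. es!(i-1)) ` {i\<in>{1..length es}. P (es!(i-1))}"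
        by (intro image_eqI[of _ _ "Suc j"]) auto
    qed
  qed
  show ?thesis using card_image[OF inj] img by simp
qed

lemma count_miss:
  assumes "distinct es"
  shows "card {e\<in>set es. e \<inter> U = {}} = length es - card {e\<in>set es. e \<inter> U \<noteq> {}}"
proof -
  have "{e\<in>set es. e \<inter> U = {}} = set es - {e\<in>set es. e \<inter> U \<noteq> {}}" by auto
  then show ?thesis using assms by (simp add: card_Diff_subset distinct_card)
qed

lemma blk_div:
  assumes "s < 2 * m"
  shows "(2 * m * q + s) div (2 * m) = (q::nat)"
  using assms by simp

lemma forward:
  fixes V :: "'v set" and es :: "'v set list"
  assumes "simple_graph V es" "U \<subseteq> V" "card U \<le> k" "card {e \<in> set es. e \<inter> U \<noteq> {}} \<ge> p"
  shows "\<exists>T :: 'v option dtree. tree_feats T \<subseteq> features V \<and> dep T \<le> k \<and>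
            card (outliers T (instance_E es eta)) \<le> (length es - p) * eta"
proof -
  have fin: "finite U" using assms(1,2) finite_subset unfolding simple_graph_def by blast
  obtain xs where xs: "set xs = U" "distinct xs" using finite_distinct_list[OF fin] by blast
  have dist: "distinct es" using assms(1) unfolding simple_graph_def by blast
  let ?M = "{i\<in>{1..length es}. es!(i-1) \<inter> U = {}}"
  have sub: "outliers (chain xs) (instance_E es eta) \<subseteq> (\<lambda>(r,i). neg_ex es r i) ` ({1..eta} \<times> ?M)"
  proof
    fix e assume e: "e \<in> outliers (chain xs) (instance_E es eta)"
    then have eE: "e \<in> instance_E es eta" and cl: "classify (chain xs) (fst e) \<noteq> snd e"
      by (auto simp: outliers_def)
    from eE consider (n) r i where "r \<in> {1..eta}" "i \<in> {1..length es}" "e = neg_ex es r i"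
      | (p) r i where "r \<in> {1..eta}" "i \<in> {1..length es}" "e = pos_ex es r i"
      unfolding instance_E_def by blast
    then show "e \<in> (\<lambda>(r,i). neg_ex es r i) ` ({1..eta} \<times> ?M)"
    proof cases
      case n
      have "es!(i-1) \<inter> U = {}"
      proof (rule ccontr)
        assume "es!(i-1) \<inter> U \<noteq> {}"
        then obtain u where "u \<in> es!(i-1)" "u \<in> U" by blast
        then have "classify (chain xs) (fst e) = False" using n xs
          by (auto simp: chain_classify neg_ex_def)
        then show False using cl n by (simp add: neg_ex_def)
      qed
      then show ?thesis using n by (intro image_eqI[of _ _ "(r,i)"]) auto
    next
      case p
      have "classify (chain xs) (fst e) = True" using p by (simp add: chain_classify pos_ex_def)
      then show ?thesis using cl p by (simp add: pos_ex_def)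
    qed
  qed
  have "card (outliers (chain xs) (instance_E es eta)) \<le> card ((\<lambda>(r,i). neg_ex es r i) ` ({1..eta} \<times> ?M))"
    by (intro card_mono sub) auto
  also have "\<dots> \<le> card ({1..eta} \<times> ?M)" by (rule card_image_le) auto
  also have "\<dots> = eta * card ?M" by (simp add: card_cartesian_product)
  also have "card ?M = length es - card {e \<in> set es. e \<inter> U \<noteq> {}}"
    using count_idx[OF dist, of "\<lambda>e. e \<inter> U = {}"] count_miss[OF dist] by simp
  also have "eta * \<dots> \<le> (length es - p) * eta" using assms(4) by (simp add: diff_le_mono2)
  finally have "card (outliers (chain xs) (instance_E es eta)) \<le> (length es - p) * eta" .
  moreover have "tree_feats (chain xs) \<subseteq> features V" using xs assms(2)
    by (auto simp: chain_feats features_def)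
  moreover have "dep (chain xs) \<le> k" using xs assms(3) by (metis chain_dep distinct_card)
  ultimately show ?thesis by blast
qed

lemma blk_of:
  fixes es :: "'v set list"
  assumes "e \<in> neg_ex es r ` {1..length es} \<union> pos_ex es r ` {1..length es}" "r \<ge> 1"
  shows "nat (fst e None - 1) div (2 * length es) = r - 1"
proof -
  from assms consider (n) i where "i \<in> {1..length es}" "e = neg_ex es r i"
    | (p) i where "i \<in> {1..length es}" "e = pos_ex es r i" by blast
  then show ?thesis
  proof cases
    case n
    have s1: "2*i - 2 < 2 * length es" using n by auto
    have "fst e None - 1 = int (2 * length es * (r - 1) + 2 * i) - 2"
      using n by (simp add: neg_ex_def)
    then have "nat (fst e None - 1) = 2 * length es * (r - 1) + 2 * i - 2" by arith
    then have "nat (fst e None - 1) = 2 * length es * (r - 1) + (2*i - 2)" using n by simp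
    then show ?thesis using blk_div[OF s1, of "r-1"] by simp
  next
    case p
    have s1: "2*i - 1 < 2 * length es" using p by auto
    have "fst e None - 1 = int (2 * length es * (r - 1) + 2 * i) - 1"
      using p by (simp add: pos_ex_def)
    then have "nat (fst e None - 1) = 2 * length es * (r - 1) + 2 * i - 1" by arith
    then have "nat (fst e None - 1) = 2 * length es * (r - 1) + (2*i - 1)" using p by simp
    then show ?thesis using blk_div[OF s1, of "r-1"] by simp
  qed
qed

lemma inst_fin: "finite (instance_E es eta)"
  unfolding instance_E_def by (intro finite_UnI finite_image_set2) auto

lemma backward:
  fixes V :: "'v set" and es :: "'v set list" and T :: "'v option dtree"
  assumes G: "simple_graph V es" and m1: "length es \<ge> 1" and pm: "p \<le> length es"
    and l_def: "l = length es - p" and eta_def: "eta = 2 ^ k * (l + 2)"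
    and feats: "tree_feats T \<subseteq> features V" and depT: "dep T \<le> k"
    and out: "card (outliers T (instance_E es eta)) \<le> l * eta"
  shows "\<exists>U. U \<subseteq> V \<and> card U \<le> k \<and> card {e \<in> set es. e \<inter> U \<noteq> {}} \<ge> p"
proof (rule ccontr)
  assume H: "\<not> ?thesis"
  have dist: "distinct es" using G unfolding simple_graph_def by blast
  define m where "m = length es"
  define a where "a = (\<lambda>r. int (2*m*(r-1)))"
  define Unc where "Unc = {r\<in>{1..eta}. \<forall>th\<in>thr T. th \<le> a r \<or> th \<ge> a r + 2*int m}"
  define B where "B = (\<lambda>r. neg_ex es r ` {1..m} \<union> pos_ex es r ` {1..m})"
  have finB: "finite (B r)" for r by (simp add: B_def)
  have one: "l + 1 \<le> card (outliers T (B r))" if r: "r \<in> Unc" for r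
  proof -
    obtain W where W: "finite W" "Some ` W \<subseteq> tree_feats T" "card W \<le> dep T"
      "card {i\<in>{1..m}. es!(i-1) \<inter> W = {}} \<le> card (outliers T (B r))"
      using block[of T es r "{1..m}"] r unfolding Unc_def a_def B_def m_def by auto
    have "W \<subseteq> V" using W(2) feats by (auto simp: features_def)
    moreover have "card W \<le> k" using W(3) depT by simp
    ultimately have "card {e \<in> set es. e \<inter> W \<noteq> {}} < p" using H not_le by blast
    moreover have "card {i\<in>{1..m}. es!(i-1) \<inter> W = {}} = m - card {e \<in> set es. e \<inter> W \<noteq> {}}"
      using count_idx[OF dist, of "\<lambda>e. e \<inter> W = {}"] count_miss[OF dist] by (simp add: m_def)
    ultimately show ?thesis using W(4) pm l_def m_def by linarith
  qed
  have BE: "B r \<subseteq> instance_E es eta" if "r \<in> {1..eta}" for r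
    unfolding B_def instance_E_def m_def using that by blast
  have disj: "B r \<inter> B r' = {}" if "r \<in> Unc" "r' \<in> Unc" "r \<noteq> r'" for r r'
  proof (rule ccontr)
    assume "B r \<inter> B r' \<noteq> {}"
    then obtain e where e: "e \<in> B r" "e \<in> B r'" by blast
    have "r \<ge> 1" "r' \<ge> 1" using that by (auto simp: Unc_def)
    have m1': "e \<in> neg_ex es r ` {1..length es} \<union> pos_ex es r ` {1..length es}" using e(1) unfolding B_def m_def .
    have m2': "e \<in> neg_ex es r' ` {1..length es} \<union> pos_ex es r' ` {1..length es}" using e(2) unfolding B_def m_def .
    have "r - 1 = r' - 1" using blk_of[OF m1' \<open>r \<ge> 1\<close>] blk_of[OF m2' \<open>r' \<ge> 1\<close>] by simp
    then show False using that \<open>r \<ge> 1\<close> \<open>r' \<ge> 1\<close> by simp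
  qed
  have finU: "finite Unc" by (simp add: Unc_def)
  have "card Unc * (l + 1) = (\<Sum>r\<in>Unc. l + 1)" by simp
  also have "\<dots> \<le> (\<Sum>r\<in>Unc. card (outliers T (B r)))" using one by (intro sum_mono) auto
  also have "\<dots> = card (\<Union>r\<in>Unc. outliers T (B r))"
  proof (rule card_UN_disjoint[symmetric])
    show "finite Unc" by (rule finU)
    show "\<forall>i\<in>Unc. finite (outliers T (B i))" using finB outliers_fin by blast
    show "\<forall>i\<in>Unc. \<forall>j\<in>Unc. i \<noteq> j \<longrightarrow> outliers T (B i) \<inter> outliers T (B j) = {}"
      using disj by (auto simp: outliers_def)
  qed
  also have "\<dots> \<le> card (outliers T (instance_E es eta))"
  proof (rule card_mono)
    show "finite (outliers T (instance_E es eta))"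
      by (rule outliers_fin) (rule inst_fin)
    show "(\<Union>r\<in>Unc. outliers T (B r)) \<subseteq> outliers T (instance_E es eta)"
    proof (rule UN_least)
      fix r assume "r \<in> Unc"
      then have "r \<in> {1..eta}" unfolding Unc_def by blast
      then show "outliers T (B r) \<subseteq> outliers T (instance_E es eta)" by (rule outliers_mono[OF BE])
    qed
  qed
  finally have lo: "card Unc * (l + 1) \<le> l * eta" using out by linarith
  have cut: "{1..eta} - Unc \<subseteq> (\<lambda>th. nat (th - 1) div (2*m) + 1) ` thr T"
  proof
    fix r assume r: "r \<in> {1..eta} - Unc"
    then obtain th where th: "th \<in> thr T" "a r < th" "th < a r + 2 * int m"
      by (auto simp: Unc_def not_le)
    define s where "s = nat (th - 1 - a r)"
    have ar: "a r = int (2*m*(r-1))" unfolding a_def by (rule refl)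
    define X where "X = 2*m*(r-1)"
    have ar': "a r = int X" using ar X_def by simp
    have "nat (th - 1) = X + s" using th ar' unfolding s_def by arith
    then have "nat (th - 1) = 2*m*(r-1) + s" by (simp add: X_def)
    moreover have "s < 2*m" using th ar' unfolding s_def by arith
    ultimately have "nat (th - 1) div (2*m) + 1 = r" using blk_div[of s m "r-1"] r by simp
    then show "r \<in> (\<lambda>th. nat (th - 1) div (2*m) + 1) ` thr T" using th(1) by (intro image_eqI[of r _ th]) auto
  qed
  have "card ({1..eta} - Unc) \<le> card (thr T)"
  proof -
    have "card ({1..eta} - Unc) \<le> card ((\<lambda>th. nat (th - 1) div (2*m) + 1) ` thr T)"
      by (rule card_mono[OF _ cut]) (simp add: thr_fin)
    also have "\<dots> \<le> card (thr T)" by (rule card_image_le[OF thr_fin])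
    finally show ?thesis .
  qed
  also have "\<dots> \<le> 2 ^ dep T - 1" by (rule thr_card)
  also have "\<dots> \<le> 2 ^ k - 1" using depT by (simp add: diff_le_mono power_increasing)
  finally have cc: "card ({1..eta} - Unc) \<le> 2 ^ k - 1" .
  have "card ({1..eta} - Unc) = eta - card Unc"
  proof -
    have "Unc \<subseteq> {1..eta}" unfolding Unc_def by blast
    then show ?thesis using card_Diff_subset[OF finU] by simp
  qed
  then have cU: "eta - (2^k - 1) \<le> card Unc" using cc by linarith
  define K :: nat where "K = 2 ^ k"
  have K1: "K \<ge> 1" by (simp add: K_def)
  have "eta = K * (l + 1) + K" by (simp add: eta_def K_def algebra_simps)
  then have "eta - (K - 1) = K * (l + 1) + 1" using K1 by linarith
  then have "K * (l + 1) + 1 \<le> card Unc" using cU by (simp add: K_def)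
  then have "(K * (l + 1) + 1) * (l + 1) \<le> card Unc * (l + 1)" by (rule mult_right_mono) simp
  then have "(K * (l + 1) + 1) * (l + 1) \<le> l * (K * (l + 2))" using lo by (simp add: eta_def K_def)
  moreover have "K * (l + 1) * (l + 1) = l * (K * (l + 2)) + K" by (simp add: algebra_simps)
  moreover have "(K * (l + 1) + 1) * (l + 1) = K * (l + 1) * (l + 1) + (l + 1)" by (simp add: algebra_simps)
  ultimately show False by linarith
qed


theorem lemma5:
  fixes V :: "'v set" and es :: "'v set list" and k p :: nat
  assumes "simple_graph V es"
    and "length es \<ge> 1"
    and "k \<ge> 1"
    and "p \<le> length es"
  shows "(\<exists>U. U \<subseteq> V \<and> card U \<le> k \<and> card {e \<in> set es. e \<inter> U \<noteq> {}} \<ge> p)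
     \<longleftrightarrow> (\<exists>T :: 'v option dtree. tree_feats T \<subseteq> features V \<and> dep T \<le> k \<and>
            card (outliers T (instance_E es (2 ^ k * (length es - p + 2))))
              \<le> (length es - p) * (2 ^ k * (length es - p + 2)))"
proof
  assume "\<exists>U. U \<subseteq> V \<and> card U \<le> k \<and> card {e \<in> set es. e \<inter> U \<noteq> {}} \<ge> p"
  then obtain U where "U \<subseteq> V" "card U \<le> k" "card {e \<in> set es. e \<inter> U \<noteq> {}} \<ge> p" by blast
  then show "\<exists>T :: 'v option dtree. tree_feats T \<subseteq> features V \<and> dep T \<le> k \<and>
            card (outliers T (instance_E es (2 ^ k * (length es - p + 2))))
              \<le> (length es - p) * (2 ^ k * (length es - p + 2))"
    using forward[OF assms(1)] by blast
next
  assume "\<exists>T :: 'v option dtree. tree_feats T \<subseteq> features V \<and> dep T \<le> k \<and>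
            card (outliers T (instance_E es (2 ^ k * (length es - p + 2))))
              \<le> (length es - p) * (2 ^ k * (length es - p + 2))"
  then obtain T :: "'v option dtree" where T: "tree_feats T \<subseteq> features V" "dep T \<le> k"
    "card (outliers T (instance_E es (2 ^ k * (length es - p + 2))))
              \<le> (length es - p) * (2 ^ k * (length es - p + 2))" by blast
  show "\<exists>U. U \<subseteq> V \<and> card U \<le> k \<and> card {e \<in> set es. e \<inter> U \<noteq> {}} \<ge> p"
    by (rule backward[OF assms(1) assms(2) assms(4) refl refl T])
qed

end
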